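(* Let $y=Fx+u\in\mathcal Y_N$. For any $v\in\mathcal Y_N$, $$\int_{-N}^NT^{\rm qnll}(y;x)\nabla v\,dx\le\tfrac12M^{(3,0)}\|\nabla u\|^2_{L^4(\Omega_{\rm l})}\|\nabla v\|_{L^2(\Omega_{\rm l})},$$ where $T^{\rm qnll}(y;x)=W_{\rm L}'(\nabla y(x))-W'(\nabla y(x))$ for $x\in\Omega_{\rm l}$ and $T^{\rm qnll}(y;x)=0$ otherwise.
   Context: One-dimensional lattice $\mathbb Z$, $F>0$. For a lattice function $w$, $\nabla w(x)=w(\xi)-w(\xi-1)$ for $x\in(\xi-1,\xi)$. $\mathcal Y_N=\{Fx+u: u:\mathbb Z\to\mathbb R,\ u(\xi)=0$ for $|\xi|\ge N\}$. $\mathcal R=\{\pm1,\pm2\}$, $V\in C^3(\mathbb R^{\mathcal R})$; $m(\boldsymbol\rho)=\prod_i|\rho_i|\sup_g|\partial_{\rho_1}\cdots\partial_{\rho_j}V(g)|$ for $\boldsymbol\rho\in\mathcal R^j$, $M^{(j,s)}=\sum_{\boldsymbol\rho\in\mathcal R^j}m(\boldsymbol\rho)|\boldsymbol\rho|_\infty^s$. $W(G)=V((G\rho)_{\rho\in\mathcal R})$; $W_{\rm L}(G)=W(F)+W'(F)(G-F)+\frac12W''(F)(G-F)^2$. $\Omega_{\rm l}=[-N,-L]\cup[L,N]$ for an integer $L<N$. $T^{\rm qnll}$ is the stress difference between the QNLL model (using $W_{\rm L}$ on $\Omega_{\rm l}$) and the QNL model (using $W$ there); they agree off $\Omega_{\rm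 l}$. *)

theory Defs
  imports "HOL-Analysis.Analysis"
begin

text \<open>Interaction range R = {-2,-1,1,2}; the space of site-potential arguments
  is R^R, represented as real^4 with coordinates indexed via rho_of / ridx.\<close>

definition Rset :: "int set" where
  "Rset = {-2, -1, 1, 2}"

definition rho_of :: "4 \<Rightarrow> int" where
  "rho_of i = (if i = 1 then -2 else if i = 2 then -1 else if i = 3 then 1 else 2)"

definition ridx :: "int \<Rightarrow> 4" where
  "ridx r = (if r = -2 then 1 else if r = -1 then 2 else if r = 1 then 3 else 4)"

definition partial :: "4 \<Rightarrow> (real^4 \<Rightarrow> real) \<Rightarrow> real^4 \<Rightarrow> real" where
  "partial i f g = deriv (\<lambda>t. f (g + t *\<^sub>R axis i 1)) 0"

definition has_partials :: "(real^4 \<Rightarrow> real) \<Rightarrow> bool" where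
  "has_partials f \<longleftrightarrow> (\<forall>i g. (\<lambda>t. f (g + t *\<^sub>R axis i 1)) differentiable (at 0))"

definition C3 :: "(real^4 \<Rightarrow> real) \<Rightarrow> bool" where
  "C3 f \<longleftrightarrow> continuous_on UNIV f \<and> has_partials f \<and>
     (\<forall>i. continuous_on UNIV (partial i f) \<and> has_partials (partial i f)) \<and>
     (\<forall>i j. continuous_on UNIV (partial j (partial i f)) \<and> has_partials (partial j (partial i f))) \<and>
     (\<forall>i j k. continuous_on UNIV (partial k (partial j (partial i f))))"

definition d3 :: "(real^4 \<Rightarrow> real) \<Rightarrow> int \<Rightarrow> int \<Rightarrow> int \<Rightarrow> real^4 \<Rightarrow> real" where
  "d3 V r1 r2 r3 = partial (ridx r1) (partial (ridx r2) (partial (ridx r3) V))"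

definition m3 :: "(real^4 \<Rightarrow> real) \<Rightarrow> int \<Rightarrow> int \<Rightarrow> int \<Rightarrow> real" where
  "m3 V r1 r2 r3 = \<bar>real_of_int (r1 * r2 * r3)\<bar> * (SUP g. \<bar>d3 V r1 r2 r3 g\<bar>)"

text \<open>M^(3,0) = sum over rho in R^3 of m(rho) |rho|_inf^0.\<close>
definition M30 :: "(real^4 \<Rightarrow> real) \<Rightarrow> real" where
  "M30 V = (\<Sum>r1\<in>Rset. \<Sum>r2\<in>Rset. \<Sum>r3\<in>Rset. m3 V r1 r2 r3)"

definition Wf :: "(real^4 \<Rightarrow> real) \<Rightarrow> real \<Rightarrow> real" where
  "Wf V G = V (\<chi> i. G * real_of_int (rho_of i))"

definition WL :: "(real^4 \<Rightarrow> real) \<Rightarrow> real \<Rightarrow> real \<Rightarrow> real" where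
  "WL V F G = Wf V F + deriv (Wf V) F * (G - F)
              + 1/2 * deriv (deriv (Wf V)) F * (G - F)^2"

text \<open>Piecewise constant gradient: for x in (xi-1, xi), grad w x = w xi - w (xi-1).
  (At integer points, a null set, the value of the left interval is used.)\<close>
definition grad :: "(int \<Rightarrow> real) \<Rightarrow> real \<Rightarrow> real" where
  "grad w x = w \<lceil>x\<rceil> - w (\<lceil>x\<rceil> - 1)"

definition YN :: "real \<Rightarrow> int \<Rightarrow> (int \<Rightarrow> real) set" where
  "YN F N = {y. \<exists>u. (\<forall>\<xi>. \<bar>\<xi>\<bar> \<ge> N \<longrightarrow> u \<xi> = 0) \<and> y = (\<lambda>\<xi>. F * real_of_int \<xi> + u \<xi>)}"

definition Omega_l :: "int \<Rightarrow> int \<Rightarrow> real set" where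
  "Omega_l N L = {real_of_int (-N) .. real_of_int (-L)} \<union> {real_of_int L .. real_of_int N}"

definition Tqnll :: "(real^4 \<Rightarrow> real) \<Rightarrow> real \<Rightarrow> int \<Rightarrow> int \<Rightarrow> (int \<Rightarrow> real) \<Rightarrow> real \<Rightarrow> real" where
  "Tqnll V F N L y x = (if x \<in> Omega_l N L
      then deriv (WL V F) (grad y x) - deriv (Wf V) (grad y x) else 0)"

definition Lp_norm :: "real \<Rightarrow> real set \<Rightarrow> (real \<Rightarrow> real) \<Rightarrow> real" where
  "Lp_norm p S f = (integral S (\<lambda>x. \<bar>f x\<bar> powr p)) powr (1/p)"

end

theory Submission
  imports Defs
begin

lemma partial_deriv_at:
  assumes hp: "has_partials f"
  shows "((\<lambda>t. f (q + t *\<^sub>R axis k (1::real))) has_real_derivative partial k f (q + t0 *\<^sub>R axis k (1::real))) (at t0)"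
proof -
  let ?p = "q + t0 *\<^sub>R axis k (1::real)"
  have "(\<lambda>t. f (?p + t *\<^sub>R axis k (1::real))) differentiable (at 0)"
    using hp unfolding has_partials_def by blast
  then have "((\<lambda>t. f (?p + t *\<^sub>R axis k (1::real))) has_real_derivative partial k f ?p) (at 0)"
    unfolding partial_def using DERIV_deriv_iff_real_differentiable by blast
  moreover have "(\<lambda>t. f (?p + t *\<^sub>R axis k (1::real))) = (\<lambda>t. f (q + (t + t0) *\<^sub>R axis k (1::real)))"
    by (simp add: algebra_simps scaleR_add_left)
  ultimately have "((\<lambda>t. f (q + (t + t0) *\<^sub>R axis k (1::real))) has_real_derivative partial k f ?p) (at 0)"
    by simp
  then show ?thesis using DERIV_shift[of "\<lambda>t. f (q + t *\<^sub>R axis k (1::real))" "partial k f ?p" 0 t0]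
    by simp
qed

lemma coord_est:
  assumes hp: "has_partials f" and cont: "isCont (partial k f) g" and e: "e > 0"
  shows "\<exists>\<delta>>0. \<forall>q s. norm (q - g) < \<delta> \<and> \<bar>s\<bar> < \<delta> \<longrightarrow>
     \<bar>f (q + s *\<^sub>R axis k (1::real)) - f q - s * partial k f g\<bar> \<le> e * \<bar>s\<bar>"
proof -
  obtain d0 where d0: "d0 > 0" "\<And>x. dist x g < d0 \<Longrightarrow> dist (partial k f x) (partial k f g) < e"
    using cont e unfolding continuous_at_eps_delta by blast
  show ?thesis
  proof (intro exI[of _ "d0/2"] conjI allI impI)
    show "d0/2 > 0" using d0 by simp
    fix q s assume qs: "norm (q - g) < d0/2 \<and> \<bar>s\<bar> < d0/2"
    let ?phi = "\<lambda>t. f (q + t *\<^sub>R axis k (1::real))"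
    let ?D = "\<lambda>t. partial k f (q + t *\<^sub>R axis k (1::real))"
    have der: "\<And>t. (?phi has_real_derivative ?D t) (at t)"
      using partial_deriv_at[OF hp] by blast
    have close: "\<bar>?D z - partial k f g\<bar> < e" if "\<bar>z\<bar> \<le> \<bar>s\<bar>" for z
    proof -
      have "norm (q + z *\<^sub>R axis k (1::real) - g) \<le> norm (q - g) + norm (z *\<^sub>R axis k (1::real))"
        using norm_triangle_ineq[of "q - g" "z *\<^sub>R axis k (1::real)"] by (simp add: algebra_simps norm_axis_1)
      also have "norm (z *\<^sub>R axis k (1::real)) = \<bar>z\<bar>" by (simp add: norm_axis_1)
      finally have "dist (q + z *\<^sub>R axis k (1::real)) g < d0" using qs that by (simp add: dist_norm)
      from d0(2)[OF this] show ?thesis by (simp add: dist_real_def)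
    qed
    consider "s = 0" | "s > 0" | "s < 0" by linarith
    then show "\<bar>f (q + s *\<^sub>R axis k (1::real)) - f q - s * partial k f g\<bar> \<le> e * \<bar>s\<bar>"
    proof cases
      case 1 then show ?thesis by simp
    next
      case 2
      obtain z where z: "0 < z" "z < s" "?phi s - ?phi 0 = (s - 0) * ?D z"
        using MVT2[OF 2, of ?phi ?D] der by blast
      have "\<bar>?D z - partial k f g\<bar> < e" using close z 2 by simp
      then have "\<bar>s * (?D z - partial k f g)\<bar> \<le> e * \<bar>s\<bar>"
        unfolding abs_mult by (metis abs_ge_zero less_imp_le mult.commute mult_left_mono)
      then show ?thesis using z by (simp add: algebra_simps norm_axis_1)
    next
      case 3
      obtain z where z: "s < z" "z < 0" "?phi 0 - ?phi s = (0 - s) * ?D z"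
        using MVT2[OF 3, of ?phi ?D] der by blast
      have "\<bar>?D z - partial k f g\<bar> < e" using close z 3 by simp
      then have "\<bar>s * (?D z - partial k f g)\<bar> \<le> e * \<bar>s\<bar>"
        unfolding abs_mult by (metis abs_ge_zero less_imp_le mult.commute mult_left_mono)
      then show ?thesis using z by (simp add: algebra_simps norm_axis_1)
    qed
  qed
qed

lemma vec4_decomp:
  fixes d :: "real^4"
  shows "d = d$1 *\<^sub>R axis 1 (1::real) + d$2 *\<^sub>R axis 2 (1::real) + d$3 *\<^sub>R axis 3 (1::real) + d$4 *\<^sub>R axis 4 (1::real)"
  by (simp add: vec_eq_iff forall_4 axis_def)

lemma dir_deriv0:
  fixes f :: "real^4 \<Rightarrow> real"
  assumes hp: "has_partials f" and cont: "\<And>i. isCont (partial i f) g"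
  shows "((\<lambda>t. f (g + t *\<^sub>R d)) has_real_derivative (\<Sum>i\<in>UNIV. d$i * partial i f g)) (at 0)"
proof -
  define S where "S = \<bar>d$1\<bar> + \<bar>d$2\<bar> + \<bar>d$3\<bar> + \<bar>d$4\<bar>"
  have S0: "S \<ge> 0" unfolding S_def by simp
  define e1 where "e1 = (axis 1 (1::real) :: real^4)"
  define e2 where "e2 = (axis 2 (1::real) :: real^4)"
  define e3 where "e3 = (axis 3 (1::real) :: real^4)"
  define e4 where "e4 = (axis 4 (1::real) :: real^4)"
  have dd: "d = d$1 *\<^sub>R e1 + d$2 *\<^sub>R e2 + d$3 *\<^sub>R e3 + d$4 *\<^sub>R e4"
    unfolding e1_def e2_def e3_def e4_def by (rule vec4_decomp)
  define D where "D = (\<Sum>i\<in>UNIV. d$i * partial i f g)"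
  have DD: "D = d$1 * partial 1 f g + d$2 * partial 2 f g + d$3 * partial 3 f g + d$4 * partial 4 f g"
    unfolding D_def sum_4 by simp
  have "((\<lambda>y. (f (g + y *\<^sub>R d) - f (g + 0 *\<^sub>R d)) / (y - 0)) \<longlongrightarrow> D) (at 0)"
  proof (rule LIM_I)
    fix r :: real assume r: "r > 0"
    define e where "e = r / (2 * (S + 1))"
    have e: "e > 0" unfolding e_def using r S0 by simp
    obtain d1 where d1: "d1 > 0" "\<And>q s. norm (q - g) < d1 \<and> \<bar>s\<bar> < d1 \<Longrightarrow>
        \<bar>f (q + s *\<^sub>R e1) - f q - s * partial 1 f g\<bar> \<le> e * \<bar>s\<bar>"
      using coord_est[OF hp cont e, of 1] unfolding e1_def by blast
    obtain d2 where d2: "d2 > 0" "\<And>q s. norm (q - g) < d2 \<and> \<bar>s\<bar> < d2 \<Longrightarrow>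
        \<bar>f (q + s *\<^sub>R e2) - f q - s * partial 2 f g\<bar> \<le> e * \<bar>s\<bar>"
      using coord_est[OF hp cont e, of 2] unfolding e2_def by blast
    obtain d3 where d3: "d3 > 0" "\<And>q s. norm (q - g) < d3 \<and> \<bar>s\<bar> < d3 \<Longrightarrow>
        \<bar>f (q + s *\<^sub>R e3) - f q - s * partial 3 f g\<bar> \<le> e * \<bar>s\<bar>"
      using coord_est[OF hp cont e, of 3] unfolding e3_def by blast
    obtain d4 where d4: "d4 > 0" "\<And>q s. norm (q - g) < d4 \<and> \<bar>s\<bar> < d4 \<Longrightarrow>
        \<bar>f (q + s *\<^sub>R e4) - f q - s * partial 4 f g\<bar> \<le> e * \<bar>s\<bar>"
      using coord_est[OF hp cont e, of 4] unfolding e4_def by blast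
    define m where "m = min (min d1 d2) (min d3 d4)"
    have m: "m > 0" "m \<le> d1" "m \<le> d2" "m \<le> d3" "m \<le> d4" unfolding m_def using d1 d2 d3 d4 by auto
    show "\<exists>s>0. \<forall>h. h \<noteq> 0 \<and> norm (h - 0) < s \<longrightarrow>
        norm ((f (g + h *\<^sub>R d) - f (g + 0 *\<^sub>R d)) / (h - 0) - D) < r"
    proof (intro exI[of _ "m / (S + 1)"] conjI allI impI)
      show "m / (S + 1) > 0" using m S0 by simp
      fix h :: real assume h: "h \<noteq> 0 \<and> norm (h - 0) < m / (S + 1)"
      have hS: "\<bar>h\<bar> * S < m"
      proof -
        have "\<bar>h\<bar> * S \<le> \<bar>h\<bar> * (S + 1)" by (simp add: mult_left_mono)
        also have "\<dots> < m" using h S0 by (simp add: pos_less_divide_eq)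
        finally show ?thesis .
      qed
      define a1 where "a1 = h * d$1"
      define a2 where "a2 = h * d$2"
      define a3 where "a3 = h * d$3"
      define a4 where "a4 = h * d$4"
      have sumA: "\<bar>a1\<bar> + \<bar>a2\<bar> + \<bar>a3\<bar> + \<bar>a4\<bar> = \<bar>h\<bar> * S"
        unfolding a1_def a2_def a3_def a4_def S_def by (simp add: abs_mult algebra_simps)
      define q2 where "q2 = g + a1 *\<^sub>R e1"
      define q3 where "q3 = q2 + a2 *\<^sub>R e2"
      define q4 where "q4 = q3 + a3 *\<^sub>R e3"
      have ne: "norm (c *\<^sub>R axis i (1::real)) = \<bar>c\<bar>" for c i by simp
      have nq1: "norm (g - g) \<le> 0" by simp
      have nq2: "norm (q2 - g) \<le> \<bar>a1\<bar>" unfolding q2_def e1_def by simp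
      have nq3: "norm (q3 - g) \<le> \<bar>a1\<bar> + \<bar>a2\<bar>"
        using norm_triangle_ineq[of "q2 - g" "a2 *\<^sub>R e2"] nq2 unfolding q3_def e2_def
        by (simp add: algebra_simps)
      have nq4: "norm (q4 - g) \<le> \<bar>a1\<bar> + \<bar>a2\<bar> + \<bar>a3\<bar>"
        using norm_triangle_ineq[of "q3 - g" "a3 *\<^sub>R e3"] nq3 unfolding q4_def e3_def
        by (simp add: algebra_simps)
      have E1: "\<bar>f (g + a1 *\<^sub>R e1) - f g - a1 * partial 1 f g\<bar> \<le> e * \<bar>a1\<bar>"
        by (rule d1(2)[of g a1], intro conjI; use m hS sumA nq1 abs_ge_zero[of a1] abs_ge_zero[of a2] abs_ge_zero[of a3] abs_ge_zero[of a4] in linarith)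
      have E2: "\<bar>f (q2 + a2 *\<^sub>R e2) - f q2 - a2 * partial 2 f g\<bar> \<le> e * \<bar>a2\<bar>"
        by (rule d2(2)[of q2 a2], intro conjI; use m hS sumA nq2 abs_ge_zero[of a1] abs_ge_zero[of a2] abs_ge_zero[of a3] abs_ge_zero[of a4] in linarith)
      have E3: "\<bar>f (q3 + a3 *\<^sub>R e3) - f q3 - a3 * partial 3 f g\<bar> \<le> e * \<bar>a3\<bar>"
        by (rule d3(2)[of q3 a3], intro conjI; use m hS sumA nq3 abs_ge_zero[of a1] abs_ge_zero[of a2] abs_ge_zero[of a3] abs_ge_zero[of a4] in linarith)
      have E4: "\<bar>f (q4 + a4 *\<^sub>R e4) - f q4 - a4 * partial 4 f g\<bar> \<le> e * \<bar>a4\<bar>"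
        by (rule d4(2)[of q4 a4], intro conjI; use m hS sumA nq4 abs_ge_zero[of a1] abs_ge_zero[of a2] abs_ge_zero[of a3] abs_ge_zero[of a4] in linarith)
      have gq: "g + h *\<^sub>R d = q4 + a4 *\<^sub>R e4"
        unfolding q4_def q3_def q2_def a1_def a2_def a3_def a4_def
        by (subst dd) (simp add: algebra_simps scaleR_add_right)
      have tel: "f (g + h *\<^sub>R d) - f g - h * D =
          (f (g + a1 *\<^sub>R e1) - f g - a1 * partial 1 f g)
        + (f (q2 + a2 *\<^sub>R e2) - f q2 - a2 * partial 2 f g)
        + (f (q3 + a3 *\<^sub>R e3) - f q3 - a3 * partial 3 f g)
        + (f (q4 + a4 *\<^sub>R e4) - f q4 - a4 * partial 4 f g)"
        unfolding gq DD q4_def[symmetric] q3_def[symmetric] q2_def[symmetric]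
        unfolding q4_def q3_def q2_def a1_def a2_def a3_def a4_def
        by (simp add: algebra_simps)
      have "\<bar>f (g + h *\<^sub>R d) - f g - h * D\<bar> \<le> e * (\<bar>h\<bar> * S)"
        unfolding tel sumA[symmetric] using E1 E2 E3 E4 by (simp add: algebra_simps) linarith
      also have "\<dots> < r * \<bar>h\<bar>"
      proof -
        have "S * r \<ge> 0" using r S0 by simp
        then have "e * S < r" unfolding e_def using r S0 by (simp add: field_simps) (smt (verit) mult_nonneg_nonneg)
        then show ?thesis using h by (simp add: algebra_simps)
      qed
      finally have "\<bar>f (g + h *\<^sub>R d) - f g - h * D\<bar> < r * \<bar>h\<bar>" .
      moreover have "(f (g + h *\<^sub>R d) - f (g + 0 *\<^sub>R d)) / (h - 0) - D = (f (g + h *\<^sub>R d) - f g - h * D) / h"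
        using h by (simp add: field_simps)
      ultimately show "norm ((f (g + h *\<^sub>R d) - f (g + 0 *\<^sub>R d)) / (h - 0) - D) < r"
        using h by (simp add: abs_divide pos_divide_less_eq)
    qed
  qed
  then show ?thesis unfolding D_def[symmetric] by (simp add: has_field_derivative_iff)
qed


lemma dir_deriv:
  fixes f :: "real^4 \<Rightarrow> real"
  assumes hp: "has_partials f" and cont: "\<And>i. continuous_on UNIV (partial i f)"
  shows "((\<lambda>t. f (t *\<^sub>R d)) has_real_derivative (\<Sum>i\<in>UNIV. d$i * partial i f (t *\<^sub>R d))) (at t)"
proof -
  have c: "\<And>i. isCont (partial i f) (t *\<^sub>R d)"
    using cont by (simp add: continuous_on_eq_continuous_at)
  have "((\<lambda>s. f (t *\<^sub>R d + s *\<^sub>R d)) has_real_derivative (\<Sum>i\<in>UNIV. d$i * partial i f (t *\<^sub>R d))) (at 0)"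
    by (rule dir_deriv0[OF hp c])
  moreover have "(\<lambda>s. f (t *\<^sub>R d + s *\<^sub>R d)) = (\<lambda>s. f ((s + t) *\<^sub>R d))"
    by (simp add: algebra_simps scaleR_add_left)
  ultimately show ?thesis
    using DERIV_shift[of "\<lambda>s. f (s *\<^sub>R d)" _ 0 t] by simp
qed

definition rv :: "real^4" where "rv = (\<chi> i. real_of_int (rho_of i))"

definition W1 :: "(real^4 \<Rightarrow> real) \<Rightarrow> real \<Rightarrow> real" where
  "W1 V t = (\<Sum>i\<in>UNIV. rv$i * partial i V (t *\<^sub>R rv))"
definition W2 :: "(real^4 \<Rightarrow> real) \<Rightarrow> real \<Rightarrow> real" where
  "W2 V t = (\<Sum>i\<in>UNIV. rv$i * (\<Sum>j\<in>UNIV. rv$j * partial j (partial i V) (t *\<^sub>R rv)))"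
definition W3 :: "(real^4 \<Rightarrow> real) \<Rightarrow> real \<Rightarrow> real" where
  "W3 V t = (\<Sum>i\<in>UNIV. rv$i * (\<Sum>j\<in>UNIV. rv$j * (\<Sum>k\<in>UNIV. rv$k * partial k (partial j (partial i V)) (t *\<^sub>R rv))))"

lemma Wf_eq: "Wf V t = V (t *\<^sub>R rv)"
  unfolding Wf_def rv_def by (rule arg_cong[where f=V]) (simp add: vec_eq_iff)

lemma W_derivs:
  assumes "C3 V"
  shows "((Wf V) has_real_derivative W1 V t) (at t)"
    "((W1 V) has_real_derivative W2 V t) (at t)"
    "((W2 V) has_real_derivative W3 V t) (at t)"
proof -
  have h0: "has_partials V" "\<And>i. continuous_on UNIV (partial i V)"
    and h1: "\<And>i. has_partials (partial i V)" "\<And>i j. continuous_on UNIV (partial j (partial i V))"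
    and h2: "\<And>i j. has_partials (partial j (partial i V))" "\<And>i j k. continuous_on UNIV (partial k (partial j (partial i V)))"
    using assms unfolding C3_def by blast+
  show "((Wf V) has_real_derivative W1 V t) (at t)"
    unfolding Wf_eq[abs_def] W1_def using dir_deriv[OF h0] by simp
  show "((W1 V) has_real_derivative W2 V t) (at t)"
    unfolding W1_def[abs_def] W2_def
    by (intro DERIV_sum DERIV_cmult dir_deriv h1)
  show "((W2 V) has_real_derivative W3 V t) (at t)"
    unfolding W2_def[abs_def] W3_def
    by (intro DERIV_sum DERIV_cmult dir_deriv h2)
qed

lemma deriv_Wf: "C3 V \<Longrightarrow> deriv (Wf V) = W1 V"
  using W_derivs(1) DERIV_imp_deriv by blast
lemma deriv_W1: "C3 V \<Longrightarrow> deriv (W1 V) = W2 V"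
  using W_derivs(2) DERIV_imp_deriv by blast

lemma deriv_WL: "C3 V \<Longrightarrow> deriv (WL V F) G = W1 V F + W2 V F * (G - F)"
proof -
  assume c: "C3 V"
  have "WL V F = (\<lambda>G. Wf V F + W1 V F * (G - F) + 1/2 * W2 V F * (G - F)^2)"
    unfolding WL_def[abs_def] deriv_Wf[OF c] deriv_W1[OF c] by simp
  moreover have "((\<lambda>G. Wf V F + W1 V F * (G - F) + 1/2 * W2 V F * (G - F)^2) has_real_derivative
      W1 V F + W2 V F * (G - F)) (at G)"
    by (auto intro!: derivative_eq_intros simp: field_simps)
  ultimately show ?thesis using DERIV_imp_deriv by metis
qed

lemma ridx_rho: "ridx (rho_of i) = i"
  using exhaust_4[of i] by (auto simp: ridx_def rho_of_def)

lemma rho_inj: "inj rho_of"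
  by (metis injI ridx_rho)

lemma rho_vals: "rho_of 1 = -2" "rho_of 2 = -1" "rho_of 3 = 1" "rho_of 4 = 2"
  by (simp_all add: rho_of_def)

lemma rho_img: "rho_of ` UNIV = Rset"
  unfolding UNIV_4 Rset_def by (simp only: image_insert image_empty rho_vals)

lemma sum_Rset: "(\<Sum>r\<in>Rset. h r) = (\<Sum>i\<in>UNIV. h (rho_of i))"
  unfolding rho_img[symmetric] by (simp add: sum.reindex[OF rho_inj])

lemma M30_eq: "M30 V = (\<Sum>a\<in>UNIV. \<Sum>b\<in>UNIV. \<Sum>c\<in>UNIV. m3 V (rho_of a) (rho_of b) (rho_of c))"
  unfolding M30_def sum_Rset ..

lemma W3_bound:
  assumes V_bdd: "\<And>r1 r2 r3. bdd_above (range (\<lambda>g. \<bar>d3 V r1 r2 r3 g\<bar>))"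
  shows "\<bar>W3 V t\<bar> \<le> M30 V"
proof -
  let ?P = "\<lambda>i j k. partial k (partial j (partial i V)) (t *\<^sub>R rv)"
  let ?H = "\<lambda>i j k. m3 V (rho_of k) (rho_of j) (rho_of i)"
  have eq: "W3 V t = (\<Sum>i\<in>UNIV. \<Sum>j\<in>UNIV. \<Sum>k\<in>UNIV. rv$i * rv$j * rv$k * ?P i j k)"
    unfolding W3_def by (simp add: sum_distrib_left mult.assoc)
  have tb: "\<bar>rv$i * rv$j * rv$k * ?P i j k\<bar> \<le> ?H i j k" for i j k
  proof -
    have d: "d3 V (rho_of k) (rho_of j) (rho_of i) = partial k (partial j (partial i V))"
      unfolding d3_def ridx_rho ..
    have "\<bar>?P i j k\<bar> \<le> (SUP g. \<bar>d3 V (rho_of k) (rho_of j) (rho_of i) g\<bar>)"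
      unfolding d by (rule cSUP_upper[OF UNIV_I]) (use V_bdd[of "rho_of k" "rho_of j" "rho_of i"] d in simp)
    then have "\<bar>real_of_int (rho_of k * rho_of j * rho_of i)\<bar> * \<bar>?P i j k\<bar> \<le> ?H i j k"
      unfolding m3_def by (simp add: mult_left_mono)
    moreover have "\<bar>rv$i * rv$j * rv$k * ?P i j k\<bar> = \<bar>real_of_int (rho_of k * rho_of j * rho_of i)\<bar> * \<bar>?P i j k\<bar>"
      unfolding rv_def by (simp add: abs_mult)
    ultimately show ?thesis by simp
  qed
  have "\<bar>W3 V t\<bar> \<le> (\<Sum>i\<in>UNIV. \<Sum>j\<in>UNIV. \<Sum>k\<in>UNIV. ?H i j k)"
    unfolding eq
    by (rule order_trans[OF sum_abs], rule sum_mono, rule order_trans[OF sum_abs], rule sum_mono,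
        rule order_trans[OF sum_abs], rule sum_mono, rule tb)
  also have "\<dots> = (\<Sum>j\<in>UNIV. \<Sum>i\<in>UNIV. \<Sum>k\<in>UNIV. ?H i j k)" by (rule sum.swap)
  also have "\<dots> = (\<Sum>j\<in>UNIV. \<Sum>k\<in>UNIV. \<Sum>i\<in>UNIV. ?H i j k)" by (rule sum.cong[OF refl], rule sum.swap)
  also have "\<dots> = (\<Sum>k\<in>UNIV. \<Sum>j\<in>UNIV. \<Sum>i\<in>UNIV. ?H i j k)" by (rule sum.swap)
  also have "\<dots> = M30 V" unfolding M30_eq ..
  finally show ?thesis .
qed

lemma T_pt:
  assumes c: "C3 V" and V_bdd: "\<And>r1 r2 r3. bdd_above (range (\<lambda>g. \<bar>d3 V r1 r2 r3 g\<bar>))"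
  shows "\<bar>deriv (WL V F) G - deriv (Wf V) G\<bar> \<le> 1/2 * M30 V * (G - F)^2"
proof (cases "G = F")
  case True
  then show ?thesis unfolding deriv_WL[OF c] deriv_Wf[OF c] by simp
next
  case False
  define df where "df = (\<lambda>m::nat. if m = 0 then W1 V else if m = 1 then W2 V else W3 V)"
  have "\<exists>t. (if G < F then G < t \<and> t < F else F < t \<and> t < G) \<and>
    W1 V G = (\<Sum>m<2. (df m F / fact m) * (G - F)^m) + (df 2 t / fact 2) * (G - F)^2"
  proof (rule Taylor[of 2 df "W1 V" "min F G" "max F G" F G])
    show "\<forall>m t. m < 2 \<and> min F G \<le> t \<and> t \<le> max F G \<longrightarrow> DERIV (df m) t :> df (Suc m) t"
      unfolding df_def using W_derivs[OF c] by (auto simp: less_2_cases_iff)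
  qed (use False in \<open>auto simp: df_def\<close>)
  then obtain t where t: "W1 V G = (\<Sum>m<2. (df m F / fact m) * (G - F)^m) + (df 2 t / fact 2) * (G - F)^2"
    by blast
  then have "W1 V G = W1 V F + W2 V F * (G - F) + W3 V t / 2 * (G - F)^2"
    by (simp add: df_def numeral_2_eq_2)
  then have "deriv (WL V F) G - deriv (Wf V) G = - (W3 V t / 2 * (G - F)^2)"
    unfolding deriv_WL[OF c] deriv_Wf[OF c] by simp
  then have "\<bar>deriv (WL V F) G - deriv (Wf V) G\<bar> = \<bar>W3 V t\<bar> / 2 * (G - F)^2"
    by (simp add: abs_mult)
  also have "\<dots> \<le> M30 V / 2 * (G - F)^2"
    using W3_bound[OF V_bdd, of t] by (intro mult_right_mono) auto
  finally show ?thesis by simp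
qed


lemma step_int:
  fixes \<phi> :: "int \<Rightarrow> real" and S :: "real set"
  assumes S: "bounded S" "S \<in> sets lebesgue"
  shows "(\<lambda>x. \<phi> \<lceil>x\<rceil>) integrable_on S"
proof -
  obtain R where R: "\<And>x. x \<in> S \<Longrightarrow> norm x \<le> R" using S(1) bounded_iff by blast
  define c where "c = (\<Sum>k\<in>{-\<lceil>R\<rceil>-1..\<lceil>R\<rceil>+1}. \<bar>\<phi> k\<bar>)"
  have meas: "(\<lambda>x::real. \<phi> \<lceil>x\<rceil>) \<in> borel_measurable borel"
    by measurable
  then have meas': "(\<lambda>x. \<phi> \<lceil>x\<rceil>) \<in> borel_measurable (lebesgue_on S)"
    using measurable_compose[OF id_borel_measurable_lebesgue_on[of S] meas] by simp
  show ?thesis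
  proof (rule measurable_bounded_by_integrable_imp_integrable[OF meas' _ _ S(2)])
    show "(\<lambda>x. c) integrable_on S" by (rule integrable_on_const[OF bounded_set_imp_lmeasurable[OF S]])
    fix x assume x: "x \<in> S"
    have "\<bar>x\<bar> \<le> R" using R[OF x] by simp
    then have "\<lceil>x\<rceil> \<in> {-\<lceil>R\<rceil>-1..\<lceil>R\<rceil>+1}" by (auto, linarith+)
    then show "norm (\<phi> \<lceil>x\<rceil>) \<le> c" unfolding c_def
      using member_le_sum[of "\<lceil>x\<rceil>" "{-\<lceil>R\<rceil>-1..\<lceil>R\<rceil>+1}" "\<lambda>k. \<bar>\<phi> k\<bar>"] by simp
  qed
qed

lemma grad_int:
  fixes S :: "real set" and h :: "real \<Rightarrow> real \<Rightarrow> real"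
  assumes "bounded S" "S \<in> sets lebesgue"
  shows "(\<lambda>x. h (grad u x) (grad v x)) integrable_on S"
  unfolding grad_def using step_int[OF assms, of "\<lambda>k. h (u k - u (k - 1)) (v k - v (k - 1))"] by simp

lemma grad_y: "grad (\<lambda>\<xi>. F * real_of_int \<xi> + u \<xi>) x = F + grad u x"
  unfolding grad_def by (simp add: algebra_simps)

lemma cs_real:
  fixes A B I :: real
  assumes A: "A \<ge> 0" and B: "B \<ge> 0" and H: "\<And>l. l > 0 \<Longrightarrow> I \<le> (l * A + B / l) / 2"
  shows "I \<le> sqrt A * sqrt B"
proof (cases "A > 0 \<and> B > 0")
  case True
  define l where "l = sqrt B / sqrt A"
  have l: "l > 0" using True by (simp add: l_def)
  have "l * A = sqrt A * sqrt B" unfolding l_def using True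
    by (simp add: field_simps)
  moreover have "B / l = sqrt A * sqrt B" unfolding l_def using True
    by (simp add: field_simps)
  ultimately show ?thesis using H[OF l] by simp
next
  case False
  then have z: "A = 0 \<or> B = 0" using A B by auto
  then have rhs: "sqrt A * sqrt B = 0" by auto
  show ?thesis
  proof (rule ccontr)
    assume "\<not> I \<le> sqrt A * sqrt B"
    then have I: "I > 0" using rhs by simp
    show False
    proof (cases "A = 0")
      case True
      define l where "l = (B + 1) / I"
      have l: "l > 0" using I B by (simp add: l_def)
      have "B / l = B * I / (B + 1)" using I B by (simp add: l_def field_simps)
      also have "\<dots> < I" using I B by (simp add: field_simps)
      finally show False using H[OF l] True I by simp
    next
      case False
      with z have B0: "B = 0" by simp
      define l where "l = I / (A + 1)"
      have l: "l > 0" using I A by (simp add: l_def)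
      have "l * A = I * A / (A + 1)" by (simp add: l_def)
      also have "\<dots> < I" using I A by (simp add: field_simps)
      finally show False using H[OF l] B0 I by simp
    qed
  qed
qed

lemma amgm:
  fixes l t s :: real
  assumes l: "l > 0"
  shows "t * s \<le> l / 2 * t^2 + 1 / (2 * l) * s^2"
proof -
  have "l / 2 * t^2 + 1 / (2 * l) * s^2 - t * s = (l * t - s)^2 / (2 * l)"
    using l by (simp add: field_simps power2_eq_square)
  moreover have "(l * t - s)^2 / (2 * l) \<ge> 0" using l by simp
  ultimately show ?thesis by linarith
qed


lemma abs_powr4: "\<bar>t::real\<bar> powr 4 = t ^ 4"
proof (cases "t = 0")
  case False
  then have "\<bar>t\<bar> powr 4 = \<bar>t\<bar> ^ 4" using powr_numeral[of "\<bar>t\<bar>" "num.Bit0 (num.Bit0 num.One)"] by simp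
  then show ?thesis by (simp add: power_even_abs) 
qed simp

lemma abs_powr2: "\<bar>t::real\<bar> powr 2 = t ^ 2"
proof (cases "t = 0")
  case False
  then have "\<bar>t\<bar> powr 2 = \<bar>t\<bar> ^ 2" using powr_numeral[of "\<bar>t\<bar>" "num.Bit0 num.One"] by simp
  then show ?thesis by simp
qed simp

lemma powr_quarter_sq: "(A::real) \<ge> 0 \<Longrightarrow> (A powr (1/4))^2 = sqrt A"
proof -
  assume A: "A \<ge> 0"
  have "(A powr (1/4))^2 = A powr (1/4) * A powr (1/4)" by (simp add: power2_eq_square)
  also have "\<dots> = A powr (1/4 + 1/4)" by (rule powr_add[symmetric])
  also have "\<dots> = A powr (1/2)" by (rule arg_cong[where f="\<lambda>e. A powr e"]) simp
  also have "\<dots> = sqrt A" by (rule powr_half_sqrt[OF A])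
  finally show ?thesis .
qed


lemma M30_nonneg:
  assumes V_bdd: "\<And>r1 r2 r3. bdd_above (range (\<lambda>g. \<bar>d3 V r1 r2 r3 g\<bar>))"
  shows "M30 V \<ge> 0"
proof -
  have "m3 V r1 r2 r3 \<ge> 0" for r1 r2 r3
  proof -
    have "0 \<le> \<bar>d3 V r1 r2 r3 0\<bar>" by simp
    also have "\<dots> \<le> (SUP g. \<bar>d3 V r1 r2 r3 g\<bar>)" by (rule cSUP_upper[OF UNIV_I V_bdd])
    finally show ?thesis unfolding m3_def by simp
  qed
  then show ?thesis unfolding M30_def by (simp add: sum_nonneg)
qed

theorem theorem3p4:
  fixes V :: "real^4 \<Rightarrow> real" and F :: real and N L :: int
    and u v :: "int \<Rightarrow> real"
  assumes F_pos: "F > 0"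
    and V_C3: "C3 V"
    and V_bdd: "\<And>r1 r2 r3. bdd_above (range (\<lambda>g. \<bar>d3 V r1 r2 r3 g\<bar>))"
    and LN: "L < N"
    and u_supp: "\<And>\<xi>. \<bar>\<xi>\<bar> \<ge> N \<Longrightarrow> u \<xi> = 0"
    and v_in: "v \<in> YN F N"
  shows "integral {real_of_int (-N) .. real_of_int N}
           (\<lambda>x. Tqnll V F N L (\<lambda>\<xi>. F * real_of_int \<xi> + u \<xi>) x * grad v x)
         \<le> 1/2 * M30 V * (Lp_norm 4 (Omega_l N L) (grad u))^2
             * Lp_norm 2 (Omega_l N L) (grad v)"
proof -
  define K where "K = 1/2 * M30 V"
  have K0: "K \<ge> 0" unfolding K_def using M30_nonneg[OF V_bdd] by simp
  define Om where "Om = Omega_l N L"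
  define I where "I = {real_of_int (-N) .. real_of_int N}"
  define Tc where "Tc = (\<lambda>x. deriv (WL V F) (F + grad u x) - deriv (Wf V) (F + grad u x))"
  have Omb: "bounded Om" "Om \<in> sets lebesgue"
    unfolding Om_def Omega_l_def by (auto intro!: bounded_Un)
  have OIb: "bounded (Om \<inter> I)" "Om \<inter> I \<in> sets lebesgue"
    unfolding I_def using Omb by auto
  have Tq: "Tqnll V F N L (\<lambda>\<xi>. F * real_of_int \<xi> + u \<xi>) x * grad v x
      = (if x \<in> Om then Tc x * grad v x else 0)" for x
    unfolding Tqnll_def grad_y Tc_def Om_def by simp
  have Tcb: "\<bar>Tc x\<bar> \<le> K * (grad u x)^2" for x
    using T_pt[OF V_C3 V_bdd, of F "F + grad u x"] unfolding Tc_def K_def by simp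
  have int1: "(\<lambda>x. Tc x * grad v x) integrable_on (Om \<inter> I)"
    unfolding Tc_def using grad_int[OF OIb, of "\<lambda>a b. (deriv (WL V F) (F + a) - deriv (Wf V) (F + a)) * b" u v]
    by simp
  have int2: "(\<lambda>x. K * ((grad u x)^2 * \<bar>grad v x\<bar>)) integrable_on S" if "bounded S" "S \<in> sets lebesgue" for S
    using grad_int[OF that, of "\<lambda>a b. K * (a^2 * \<bar>b\<bar>)" u v] by simp
  have int3: "(\<lambda>x. (grad u x)^2 * \<bar>grad v x\<bar>) integrable_on Om"
    using grad_int[OF Omb, of "\<lambda>a b. a^2 * \<bar>b\<bar>" u v] by simp
  define A where "A = integral Om (\<lambda>x. (grad u x)^4)"
  define B where "B = integral Om (\<lambda>x. (grad v x)^2)"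
  have intA: "(\<lambda>x. (grad u x)^4) integrable_on Om"
    using grad_int[OF Omb, of "\<lambda>a b. a^4" u v] by simp
  have intB: "(\<lambda>x. (grad v x)^2) integrable_on Om"
    using grad_int[OF Omb, of "\<lambda>a b. b^2" u v] by simp
  have A0: "A \<ge> 0" unfolding A_def by (rule integral_nonneg[OF intA]) simp
  have B0: "B \<ge> 0" unfolding B_def by (rule integral_nonneg[OF intB]) simp
  have "integral I (\<lambda>x. Tqnll V F N L (\<lambda>\<xi>. F * real_of_int \<xi> + u \<xi>) x * grad v x)
      = integral (Om \<inter> I) (\<lambda>x. Tc x * grad v x)"
    unfolding Tq by (rule integral_restrict_Int)
  also have "\<dots> \<le> integral (Om \<inter> I) (\<lambda>x. K * ((grad u x)^2 * \<bar>grad v x\<bar>))"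
  proof (rule integral_le[OF int1 int2[OF OIb]])
    fix x
    have "Tc x * grad v x \<le> \<bar>Tc x\<bar> * \<bar>grad v x\<bar>" by (simp add: abs_mult[symmetric])
    also have "\<dots> \<le> K * (grad u x)^2 * \<bar>grad v x\<bar>" by (rule mult_right_mono[OF Tcb]) simp
    finally show "Tc x * grad v x \<le> K * ((grad u x)^2 * \<bar>grad v x\<bar>)" by (simp add: mult.assoc)
  qed
  also have "\<dots> \<le> integral Om (\<lambda>x. K * ((grad u x)^2 * \<bar>grad v x\<bar>))"
    by (rule integral_subset_le[OF _ int2[OF OIb] int2[OF Omb]]) (auto intro: mult_nonneg_nonneg K0)
  also have "\<dots> = K * integral Om (\<lambda>x. (grad u x)^2 * \<bar>grad v x\<bar>)"
    by simp
  also have "\<dots> \<le> K * (sqrt A * sqrt B)"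
  proof (rule mult_left_mono[OF cs_real[OF A0 B0] K0])
    fix l :: real assume l: "l > 0"
    have "integral Om (\<lambda>x. (grad u x)^2 * \<bar>grad v x\<bar>)
        \<le> integral Om (\<lambda>x. l / 2 * (grad u x)^4 + 1 / (2 * l) * (grad v x)^2)"
    proof (rule integral_le[OF int3])
      show "(\<lambda>x. l / 2 * (grad u x)^4 + 1 / (2 * l) * (grad v x)^2) integrable_on Om"
        using grad_int[OF Omb, of "\<lambda>a b. l / 2 * a^4 + 1 / (2 * l) * b^2" u v] by simp
      fix x
      show "(grad u x)^2 * \<bar>grad v x\<bar> \<le> l / 2 * (grad u x)^4 + 1 / (2 * l) * (grad v x)^2"
        using amgm[OF l, of "(grad u x)^2" "\<bar>grad v x\<bar>"] by (simp add: power_mult[symmetric])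
    qed
    also have "\<dots> = l / 2 * A + 1 / (2 * l) * B"
      unfolding A_def B_def
      using integral_add[OF integrable_on_cmult_left[OF intA, of "l/2"] integrable_on_cmult_left[OF intB, of "1/(2*l)"]]
      by simp
    also have "\<dots> = (l * A + B / l) / 2" by (simp add: field_simps)
    finally show "integral Om (\<lambda>x. (grad u x)^2 * \<bar>grad v x\<bar>) \<le> (l * A + B / l) / 2" .
  qed
  also have "\<dots> = 1/2 * M30 V * (Lp_norm 4 (Omega_l N L) (grad u))^2 * Lp_norm 2 (Omega_l N L) (grad v)"
  proof -
    have "Lp_norm 4 (Omega_l N L) (grad u) = A powr (1/4)"
      unfolding Lp_norm_def A_def Om_def abs_powr4 ..
    moreover have "Lp_norm 2 (Omega_l N L) (grad v) = sqrt B"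
      unfolding Lp_norm_def B_def Om_def abs_powr2 using B0[unfolded B_def Om_def] by (simp add: powr_half_sqrt)
    ultimately show ?thesis using powr_quarter_sq[OF A0] unfolding K_def by simp
  qed
  finally show ?thesis unfolding I_def .
qed

end
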